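(* The equivalence class (under $\sim$) of any upper prime consists entirely of upper primes of the same length, and the equivalence class of any lower prime consists entirely of lower primes of the same length.
   Context: $\mathcal{A}$ is the free associative $\mathbb{C}$-algebra on noncommuting generators $L,R$; words are finite products of these letters. A word is balanced if it contains equally many $L$'s and $R$'s. $\mathcal{J}$ is the two-sided ideal generated by $\{FG-GF : F,G \text{ nonempty balanced words}\}$, and $X\sim Y$ means $X-Y\in\mathcal{J}$. A word is prime if it is nonempty, balanced, and not a product of two nonempty balanced words. For balanced $W=a_1\cdots a_n$, $e_k(W)=\sum_{i=1}^k\overline{a_i}$ with $\overline{R}=1$, $\overline{L}=-1$. A prime $P$ of length $n$ is an upper prime if $e_k(P)>0$ for $1\le k\le n-1$, and a lower prime if $e_k(P)<0$ for $1\le k\le n-1$. *)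

theory Defs
  imports Complex_Main "HOL-Library.Function_Algebras"
begin

datatype letter = L | R

type_synonym word = "letter list"

text \<open>Elements of the free associative C-algebra on L, R: finitely supported
  coefficient functions on words.\<close>
type_synonym alg = "word \<Rightarrow> complex"

definition fin_supp :: "alg \<Rightarrow> bool" where
  "fin_supp f \<longleftrightarrow> finite {w. f w \<noteq> 0}"

definition wd :: "word \<Rightarrow> alg" where
  "wd w = (\<lambda>x. if x = w then 1 else 0)"

definition amul :: "alg \<Rightarrow> alg \<Rightarrow> alg" where
  "amul f g = (\<lambda>w. \<Sum>p \<in> {(u, v). u @ v = w}. f (fst p) * g (snd p))"

definition balanced :: "word \<Rightarrow> bool" where
  "balanced w \<longleftrightarrow> length (filter (\<lambda>a. a = L) w) = length (filter (\<lambda>a. a = R) w)"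

inductive_set J :: "alg set" where
  gen: "\<lbrakk>F \<noteq> []; G \<noteq> []; balanced F; balanced G\<rbrakk> \<Longrightarrow> wd (F @ G) - wd (G @ F) \<in> J"
| zero: "0 \<in> J"
| add: "\<lbrakk>x \<in> J; y \<in> J\<rbrakk> \<Longrightarrow> x + y \<in> J"
| lmul: "\<lbrakk>fin_supp a; x \<in> J\<rbrakk> \<Longrightarrow> amul a x \<in> J"
| rmul: "\<lbrakk>fin_supp a; x \<in> J\<rbrakk> \<Longrightarrow> amul x a \<in> J"

definition sim :: "alg \<Rightarrow> alg \<Rightarrow> bool" (infix "\<sim>" 50) where
  "X \<sim> Y \<longleftrightarrow> X - Y \<in> J"

fun lval :: "letter \<Rightarrow> int" where
  "lval R = 1" | "lval L = -1"

definition e :: "nat \<Rightarrow> word \<Rightarrow> int" where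
  "e k w = (\<Sum>i<k. lval (w ! i))"

definition prime_word :: "word \<Rightarrow> bool" where
  "prime_word w \<longleftrightarrow> w \<noteq> [] \<and> balanced w \<and>
     \<not> (\<exists>F G. F \<noteq> [] \<and> G \<noteq> [] \<and> balanced F \<and> balanced G \<and> w = F @ G)"

definition upper_prime :: "word \<Rightarrow> bool" where
  "upper_prime P \<longleftrightarrow> prime_word P \<and> (\<forall>k. 1 \<le> k \<and> k \<le> length P - 1 \<longrightarrow> e k P > 0)"

definition lower_prime :: "word \<Rightarrow> bool" where
  "lower_prime P \<longleftrightarrow> prime_word P \<and> (\<forall>k. 1 \<le> k \<and> k \<le> length P - 1 \<longrightarrow> e k P < 0)"

end

theory Submission imports Defs begin

definition esum :: "word \<Rightarrow> int" where "esum w = sum_list (map lval w)"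

lemma esum_app[simp]: "esum (u @ v) = esum u + esum v" by (simp add: esum_def)
lemma esum_Nil[simp]: "esum [] = 0" by (simp add: esum_def)

lemma esum_count: "esum w = int (length (filter (\<lambda>a. a = R) w)) - int (length (filter (\<lambda>a. a = L) w))"
  by (induction w) (auto simp: esum_def elim: lval.elims intro: letter.exhaust split: letter.splits)

lemma balanced_esum: "balanced w \<longleftrightarrow> esum w = 0"
  unfolding balanced_def esum_count by linarith

lemma e_take: "k \<le> length w \<Longrightarrow> e k w = esum (take k w)"
proof (induction k)
  case 0 then show ?case by (simp add: e_def)
next
  case (Suc k)
  then have "take (Suc k) w = take k w @ [w ! k]" by (simp add: take_Suc_conv_app_nth)
  then show ?case using Suc by (simp add: e_def esum_def)
qed

definition Sg :: "int \<Rightarrow> nat \<Rightarrow> word set" where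
  "Sg s n = {w. w \<noteq> [] \<and> esum w = 0 \<and> length w = n \<and> (\<forall>k. 0 < k \<and> k < length w \<longrightarrow> s * esum (take k w) > 0)}"

lemma Sg_swap:
  assumes W: "u @ F @ G @ v \<in> Sg s n" and F: "F \<noteq> []" "esum F = 0" and G: "G \<noteq> []" "esum G = 0"
  shows "u @ G @ F @ v \<in> Sg s n"
proof -
  let ?W1 = "u @ F @ G @ v" and ?W2 = "u @ G @ F @ v"
  have P: "\<And>k. 0 < k \<Longrightarrow> k < length ?W1 \<Longrightarrow> s * esum (take k ?W1) > 0" using W by (simp add: Sg_def)
  have "s * esum (take k ?W2) > 0" if k: "0 < k" "k < length ?W2" for k
  proof -
    consider "k \<le> length u" | "length u < k" "k \<le> length u + length G"
      | "length u + length G < k" "k \<le> length u + length G + length F"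
      | "length u + length G + length F < k" by linarith
    then show ?thesis
    proof cases
      case 1
      then have "take k ?W2 = take k ?W1" by simp
      then show ?thesis using P[of k] k by simp
    next
      case 2
      then have t2: "take k ?W2 = u @ take (k - length u) G" by simp
      show ?thesis
      proof (cases "k + length F < length ?W1")
        case True
        have "take (k + length F) ?W1 = u @ F @ take (k - length u) G" using 2 by simp
        then show ?thesis using P[of "k + length F"] True t2 F by simp
      next
        case False
        then have "length v = 0" using 2 False unfolding length_append by linarith
        then have kk: "k = length u + length G" "v = []" using 2 False by auto
        show ?thesis
        proof (cases "u = []")
          case True
          then have "take (length F) ?W1 = F" by simp
          then have "s * esum F > 0" using P[of "length F"] F G by simp
          then show ?thesis using F by simp
        next
          case False
          then have "take (length u) ?W1 = u" by simp
          then show ?thesis using P[of "length u"] False F G kk t2 by simp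
        qed
      qed
    next
      case 3
      then have t2: "take k ?W2 = u @ G @ take (k - length u - length G) F" by simp
      have "take (k - length G) ?W1 = u @ take (k - length u - length G) F" using 3 by (simp add: add.commute)
      then show ?thesis using P[of "k - length G"] 3 k t2 G by simp
    next
      case 4
      then have t2: "take k ?W2 = u @ G @ F @ take (k - length u - length G - length F) v" by simp
      have "take k ?W1 = u @ F @ G @ take (k - length u - length G - length F) v" using 4 by (simp add: ac_simps)
      then show ?thesis using P[of k] 4 k t2 G F by simp
    qed
  qed
  then show ?thesis using W F G by (auto simp: Sg_def)
qed

definition closedS :: "word set \<Rightarrow> bool" where
  "closedS S \<longleftrightarrow> (\<forall>u v F G. F \<noteq> [] \<and> G \<noteq> [] \<and> balanced F \<and> balanced G \<longrightarrow>
      (u @ F @ G @ v \<in> S \<longleftrightarrow> u @ G @ F @ v \<in> S))"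

lemma closedS_left: "closedS S \<Longrightarrow> closedS {v. u @ v \<in> S}"
  unfolding closedS_def by (metis append.assoc mem_Collect_eq)

lemma closedS_right: "closedS S \<Longrightarrow> closedS {u. u @ v \<in> S}"
  unfolding closedS_def by simp

lemma finite_left: "finite S \<Longrightarrow> finite {v. u @ v \<in> S}"
proof -
  assume "finite S"
  moreover have "{v. u @ v \<in> S} \<subseteq> drop (length u) ` S" by force
  ultimately show ?thesis by (meson finite_imageI finite_subset)
qed

lemma finite_right: "finite S \<Longrightarrow> finite {u. u @ v \<in> S}"
proof -
  assume "finite S"
  moreover have "{u. u @ v \<in> S} \<subseteq> (\<lambda>w. take (length w - length v) w) ` S" by force
  ultimately show ?thesis by (meson finite_imageI finite_subset)
qed

lemma finite_splits: "finite {(u, v). u @ v = w}"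
proof -
  have "{(u, v). u @ v = w} \<subseteq> (\<lambda>i. (take i w, drop i w)) ` {..length w}"
  proof
    fix p assume "p \<in> {(u, v). u @ v = w}"
    then obtain u v where p: "p = (u, v)" "u @ v = w" by auto
    then show "p \<in> (\<lambda>i. (take i w, drop i w)) ` {..length w}"
      by (intro image_eqI[of _ _ "length u"]) auto
  qed
  then show ?thesis by (meson finite_imageI finite_subset finite_atMost)
qed

lemma sum_splits:
  assumes "finite S"
  shows "(\<Sum>w\<in>S. \<Sum>p\<in>{(u, v). u @ v = w}. h p) = (\<Sum>p\<in>{(u, v). u @ v \<in> S}. h p)"
proof -
  have eq: "{(u, v). u @ v \<in> S} = (\<Union>w\<in>S. {(u, v). u @ v = w})" by auto
  show ?thesis unfolding eq
    apply (rule sum.UNION_disjoint[symmetric])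
      apply (rule assms)
     apply (rule ballI, rule finite_splits)
    apply auto
    done
qed

lemma finite_P: "finite S \<Longrightarrow> finite {(u, v). u @ v \<in> (S::word set)}"
proof -
  assume f: "finite S"
  have eq: "{(u, v). u @ v \<in> S} = (\<Union>w\<in>S. {(u, v). u @ v = w})" by auto
  show ?thesis unfolding eq using f finite_splits by blast
qed

lemma J_sum: "x \<in> J \<Longrightarrow> \<forall>S. finite S \<and> closedS S \<longrightarrow> (\<Sum>w\<in>S. x w) = 0"
proof (induction rule: J.induct)
  case (gen F G)
  show ?case
  proof (intro allI impI)
    fix S :: "word set" assume S: "finite S \<and> closedS S"
    have "(F @ G \<in> S) \<longleftrightarrow> (G @ F \<in> S)"
      using S gen unfolding closedS_def by (metis append_Nil append_Nil2)
    then show "(\<Sum>w\<in>S. (wd (F @ G) - wd (G @ F)) w) = 0"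
      using S by (simp add: wd_def sum_subtractf)
  qed
next
  case zero then show ?case by simp
next
  case (add x y) then show ?case by (simp add: sum.distrib)
next
  case (lmul a x)
  show ?case
  proof (intro allI impI)
    fix S :: "word set" assume S: "finite S \<and> closedS S"
    let ?P = "{(u, v). u @ v \<in> S}"
    have fP: "finite ?P" using S finite_P by blast
    have "(\<Sum>w\<in>S. amul a x w) = (\<Sum>p\<in>?P. a (fst p) * x (snd p))"
      unfolding amul_def using S sum_splits by blast
    also have "\<dots> = (\<Sum>u\<in>fst ` ?P. \<Sum>p\<in>{p \<in> ?P. fst p = u}. a (fst p) * x (snd p))"
      by (rule sum.group[symmetric]) (auto simp: fP)
    also have "\<dots> = (\<Sum>u\<in>fst ` ?P. 0)"
    proof (rule sum.cong[OF refl])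
      fix u assume "u \<in> fst ` ?P"
      have eq: "{p \<in> ?P. fst p = u} = (\<lambda>v. (u, v)) ` {v. u @ v \<in> S}" by auto
      have "(\<Sum>p\<in>{p \<in> ?P. fst p = u}. a (fst p) * x (snd p)) = (\<Sum>v\<in>{v. u @ v \<in> S}. a u * x v)"
        unfolding eq by (subst sum.reindex) (auto simp: inj_on_def)
      also have "\<dots> = a u * (\<Sum>v\<in>{v. u @ v \<in> S}. x v)" by (simp add: sum_distrib_left)
      also have "\<dots> = 0"
      proof -
        have "(\<Sum>v\<in>{v. u @ v \<in> S}. x v) = 0" using lmul.IH S finite_left closedS_left by blast
        then show ?thesis by simp
      qed
      finally show "(\<Sum>p\<in>{p \<in> ?P. fst p = u}. a (fst p) * x (snd p)) = 0" .
    qed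
    finally show "(\<Sum>w\<in>S. amul a x w) = 0" by simp
  qed
next
  case (rmul a x)
  show ?case
  proof (intro allI impI)
    fix S :: "word set" assume S: "finite S \<and> closedS S"
    let ?P = "{(u, v). u @ v \<in> S}"
    have fP: "finite ?P" using S finite_P by blast
    have "(\<Sum>w\<in>S. amul x a w) = (\<Sum>p\<in>?P. x (fst p) * a (snd p))"
      unfolding amul_def using S sum_splits by blast
    also have "\<dots> = (\<Sum>v\<in>snd ` ?P. \<Sum>p\<in>{p \<in> ?P. snd p = v}. x (fst p) * a (snd p))"
      by (rule sum.group[symmetric]) (auto simp: fP)
    also have "\<dots> = (\<Sum>v\<in>snd ` ?P. 0)"
    proof (rule sum.cong[OF refl])
      fix v assume "v \<in> snd ` ?P"
      have eq: "{p \<in> ?P. snd p = v} = (\<lambda>u. (u, v)) ` {u. u @ v \<in> S}" by auto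
      have "(\<Sum>p\<in>{p \<in> ?P. snd p = v}. x (fst p) * a (snd p)) = (\<Sum>u\<in>{u. u @ v \<in> S}. x u * a v)"
        unfolding eq by (subst sum.reindex) (auto simp: inj_on_def)
      also have "\<dots> = (\<Sum>u\<in>{u. u @ v \<in> S}. x u) * a v" by (simp add: sum_distrib_right)
      also have "\<dots> = 0"
      proof -
        have "(\<Sum>u\<in>{u. u @ v \<in> S}. x u) = 0" using rmul.IH S finite_right closedS_right by blast
        then show ?thesis by simp
      qed
      finally show "(\<Sum>p\<in>{p \<in> ?P. snd p = v}. x (fst p) * a (snd p)) = 0" .
    qed
    finally show "(\<Sum>w\<in>S. amul x a w) = 0" by simp
  qed
qed

lemma closed_Sg: "closedS (Sg s n)"
  unfolding closedS_def balanced_esum by (metis Sg_swap)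

lemma finite_Sg: "finite (Sg s n)"
proof -
  have U: "(UNIV :: letter set) = {L, R}" using letter.exhaust by auto
  have "finite {xs. set xs \<subseteq> (UNIV :: letter set) \<and> length xs = n}"
    by (rule finite_lists_length_eq) (simp add: U)
  moreover have "Sg s n \<subseteq> {xs. set xs \<subseteq> (UNIV :: letter set) \<and> length xs = n}"
    by (auto simp: Sg_def)
  ultimately show ?thesis by (rule finite_subset[rotated])
qed

lemma class_Sg:
  assumes "wd W \<sim> wd P" "P \<in> Sg s n"
  shows "W \<in> Sg s n"
proof -
  have "wd W - wd P \<in> J" using assms by (simp add: sim_def)
  then have "(\<Sum>w\<in>Sg s n. (wd W - wd P) w) = 0"
    using J_sum finite_Sg closed_Sg by blast
  then show ?thesis using assms(2) finite_Sg by (simp add: wd_def sum_subtractf split: if_splits)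
qed

lemma prime_char:
  assumes "w \<noteq> []" "balanced w" "\<forall>k. 0 < k \<and> k < length w \<longrightarrow> e k w \<noteq> 0"
  shows "prime_word w"
proof -
  have "\<not> (\<exists>F G. F \<noteq> [] \<and> G \<noteq> [] \<and> balanced F \<and> balanced G \<and> w = F @ G)"
  proof
    assume "\<exists>F G. F \<noteq> [] \<and> G \<noteq> [] \<and> balanced F \<and> balanced G \<and> w = F @ G"
    then obtain F G where FG: "F \<noteq> []" "G \<noteq> []" "balanced F" "w = F @ G" by blast
    then have "e (length F) w = esum F" by (simp add: e_take)
    then have "e (length F) w = 0" using FG balanced_esum by simp
    then show False using assms(3) FG by simp
  qed
  then show ?thesis using assms by (simp add: prime_word_def)
qed

lemma range_conv: "(\<forall>k. 1 \<le> k \<and> k \<le> length w - 1 \<longrightarrow> Q k) \<longleftrightarrow> (\<forall>k. 0 < k \<and> k < length w \<longrightarrow> Q k)"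
  by (cases w) auto

lemma take_conv: "(\<forall>k. 0 < k \<and> k < length w \<longrightarrow> Q (e k w)) \<longleftrightarrow> (\<forall>k. 0 < k \<and> k < length w \<longrightarrow> Q (esum (take k w)))"
  by (auto simp: e_take)

lemma upper_Sg: "upper_prime w \<longleftrightarrow> w \<in> Sg 1 (length w)"
proof
  assume "upper_prime w"
  then show "w \<in> Sg 1 (length w)"
    unfolding upper_prime_def prime_word_def Sg_def balanced_esum range_conv
    using take_conv[of w "\<lambda>x. 0 < x"] by simp
next
  assume A: "w \<in> Sg 1 (length w)"
  then have B: "\<forall>k. 0 < k \<and> k < length w \<longrightarrow> e k w > 0"
    using take_conv[of w "\<lambda>x. 0 < x"] by (simp add: Sg_def)
  then have "\<forall>k. 0 < k \<and> k < length w \<longrightarrow> e k w \<noteq> 0" by force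
  then have "prime_word w" using A prime_char[of w] by (simp add: Sg_def balanced_esum)
  then show "upper_prime w" using B unfolding upper_prime_def range_conv by simp
qed

lemma lower_Sg: "lower_prime w \<longleftrightarrow> w \<in> Sg (-1) (length w)"
proof
  assume "lower_prime w"
  then show "w \<in> Sg (-1) (length w)"
    unfolding lower_prime_def prime_word_def Sg_def balanced_esum range_conv
    using take_conv[of w "\<lambda>x. x < 0"] by simp
next
  assume A: "w \<in> Sg (-1) (length w)"
  then have B: "\<forall>k. 0 < k \<and> k < length w \<longrightarrow> e k w < 0"
    using take_conv[of w "\<lambda>x. x < 0"] by (simp add: Sg_def)
  then have "\<forall>k. 0 < k \<and> k < length w \<longrightarrow> e k w \<noteq> 0" by force
  then have "prime_word w" using A prime_char[of w] by (simp add: Sg_def balanced_esum)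
  then show "lower_prime w" using B unfolding lower_prime_def range_conv by simp
qed

theorem lemma5p6:
  shows "(\<forall>P W. upper_prime P \<and> wd W \<sim> wd P \<longrightarrow> upper_prime W \<and> length W = length P) \<and>
         (\<forall>P W. lower_prime P \<and> wd W \<sim> wd P \<longrightarrow> lower_prime W \<and> length W = length P)"
proof (rule conjI; intro allI impI)
  fix P W assume A: "upper_prime P \<and> wd W \<sim> wd P"
  then have "W \<in> Sg 1 (length P)" using class_Sg upper_Sg by blast
  then have "length W = length P" by (simp add: Sg_def)
  then show "upper_prime W \<and> length W = length P" using \<open>W \<in> Sg 1 (length P)\<close> upper_Sg by simp
next
  fix P W assume A: "lower_prime P \<and> wd W \<sim> wd P"
  then have "W \<in> Sg (-1) (length P)" using class_Sg lower_Sg by blast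
  then have "length W = length P" by (simp add: Sg_def)
  then show "lower_prime W \<and> length W = length P" using \<open>W \<in> Sg (-1) (length P)\<close> lower_Sg by simp
qed

end
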